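(* Let $\mathcal{M}$ be a saturated model of Presburger arithmetic, $\mathcal{M}_0\preceq\mathcal{M}$ small, $p(x)\in S_n(\mathcal{M}_0)$ a complete type of dimension $n$ with set of realizations $\mathcal{P}\subseteq\mathcal{M}^n$, and $\alpha:\mathcal{P}\to\mathcal{M}$ a relatively $\mathcal{M}_0$-definable function. Let $a\in\mathcal{P}$ and suppose $q=\mathrm{tp}(\alpha(a)/\mathcal{M}_0)$ is non-algebraic. Let $\mathcal{Q}'$ be the set of elements of $\mathcal{M}$ lying in the same $\mathcal{M}_0$-cut as $\alpha(a)$. Then there are $a^1,a^2\in\mathcal{P}$ such that $\alpha(a^1)<\mathrm{dcl}(a\mathcal{M}_0)\cap\mathcal{Q}'<\alpha(a^2)$.
   Context: Presburger arithmetic is $\mathrm{Th}(\mathbb{Z},+,-,<,0,1,\{\equiv_n\}_n)$. A type over $\mathcal{M}_0$ has dimension $n$ if its realizations $c$ have $\dim(c/\mathcal{M}_0)=n$, where the dimension of a tuple is the size of a maximal dcl-independent subset of its coordinates over $\mathcal{M}_0$. A relatively $\mathcal{M}_0$-definable function on $\mathcal{P}$ is the restriction to $\mathcal{P}$ of an $\mathcal{M}_0$-definable function. Two elements lie in the same $\mathcal{M}_0$-cut if they have the same type over $\mathcal{M}_0$ in the language $\{<\}$. For $X\subseteq\mathcal{M}$, $u<X<v$ means $u<x<v$ for all $x\in X$. *)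

theory Defs
  imports Main
begin

text \<open>Terms and formulas in the language (+,-,<,0,1,{cong_n}_n), with named variables
  (indexed by nat) and parameters (elements of the ambient model, constructor Par).\<close>

datatype 'a trm = Var nat | Par 'a | Zero | One
  | Plus "'a trm" "'a trm" | Minus "'a trm" "'a trm"

datatype 'a fm = Eq "'a trm" "'a trm" | Less "'a trm" "'a trm" | Cong nat "'a trm" "'a trm"
  | Neg "'a fm" | Conj "'a fm" "'a fm" | Ex nat "'a fm"

record 'a pres_struct =
  zero :: 'a
  one :: 'a
  plus :: "'a \<Rightarrow> 'a \<Rightarrow> 'a"
  minus :: "'a \<Rightarrow> 'a \<Rightarrow> 'a"
  less :: "'a \<Rightarrow> 'a \<Rightarrow> bool"
  cong :: "nat \<Rightarrow> 'a \<Rightarrow> 'a \<Rightarrow> bool"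

fun fv_trm :: "'a trm \<Rightarrow> nat set" where
  "fv_trm (Var v) = {v}"
| "fv_trm (Par c) = {}"
| "fv_trm Zero = {}"
| "fv_trm One = {}"
| "fv_trm (Plus t u) = fv_trm t \<union> fv_trm u"
| "fv_trm (Minus t u) = fv_trm t \<union> fv_trm u"

fun fv :: "'a fm \<Rightarrow> nat set" where
  "fv (Eq t u) = fv_trm t \<union> fv_trm u"
| "fv (Less t u) = fv_trm t \<union> fv_trm u"
| "fv (Cong k t u) = fv_trm t \<union> fv_trm u"
| "fv (Neg f) = fv f"
| "fv (Conj f g) = fv f \<union> fv g"
| "fv (Ex v f) = fv f - {v}"

fun eval :: "'a pres_struct \<Rightarrow> (nat \<Rightarrow> 'a) \<Rightarrow> 'a trm \<Rightarrow> 'a" where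
  "eval S e (Var v) = e v"
| "eval S e (Par c) = c"
| "eval S e Zero = zero S"
| "eval S e One = one S"
| "eval S e (Plus t u) = plus S (eval S e t) (eval S e u)"
| "eval S e (Minus t u) = minus S (eval S e t) (eval S e u)"

text \<open>Satisfaction; quantifiers range over the domain D (D = UNIV: the model itself;
  D a subset: the induced substructure).\<close>
fun sat :: "'a pres_struct \<Rightarrow> 'a set \<Rightarrow> (nat \<Rightarrow> 'a) \<Rightarrow> 'a fm \<Rightarrow> bool" where
  "sat S D e (Eq t u) = (eval S e t = eval S e u)"
| "sat S D e (Less t u) = less S (eval S e t) (eval S e u)"
| "sat S D e (Cong k t u) = cong S k (eval S e t) (eval S e u)"
| "sat S D e (Neg f) = (\<not> sat S D e f)"
| "sat S D e (Conj f g) = (sat S D e f \<and> sat S D e g)"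
| "sat S D e (Ex v f) = (\<exists>x\<in>D. sat S D (e(v := x)) f)"

definition Zstruct :: "int pres_struct" where
  "Zstruct = \<lparr>zero = 0, one = 1, plus = (+), minus = (-), less = (<),
     cong = (\<lambda>k x y. x mod int k = y mod int k)\<rparr>"

text \<open>M (with carrier the whole type) is a model of Presburger arithmetic Th(Z).\<close>
definition presburger_model :: "'a pres_struct \<Rightarrow> bool" where
  "presburger_model M \<longleftrightarrow>
     (\<forall>\<phi>::'a fm. set_fm \<phi> = {} \<longrightarrow> fv \<phi> = {} \<longrightarrow>
        (sat M UNIV (\<lambda>_. zero M) \<phi> \<longleftrightarrow> sat Zstruct UNIV (\<lambda>_. 0) (map_fm (\<lambda>_. 0) \<phi>)))"

definition tenv :: "'a list \<Rightarrow> nat \<Rightarrow> 'a" where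
  "tenv b = (\<lambda>i. b ! i)"

definition fmls :: "'a set \<Rightarrow> nat \<Rightarrow> 'a fm set" where
  "fmls A n = {\<phi>. set_fm \<phi> \<subseteq> A \<and> fv \<phi> \<subseteq> {..<n}}"

definition elem_sub :: "'a pres_struct \<Rightarrow> 'a set \<Rightarrow> bool" where
  "elem_sub M M0 \<longleftrightarrow> M0 \<noteq> {} \<and>
     (\<forall>\<phi> e. set_fm \<phi> \<subseteq> M0 \<longrightarrow> (\<forall>v\<in>fv \<phi>. e v \<in> M0) \<longrightarrow>
        (sat M M0 e \<phi> \<longleftrightarrow> sat M UNIV e \<phi>))"

definition small :: "'a set \<Rightarrow> bool" where
  "small A \<longleftrightarrow> (card_of A, card_of (UNIV :: 'a set)) \<in> ordLess"

text \<open>Saturated: |M|-saturated, i.e. every finitely satisfiable set of formulas in one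
  variable with parameters from a small set is realized.\<close>
definition saturated :: "'a pres_struct \<Rightarrow> bool" where
  "saturated M \<longleftrightarrow>
     (\<forall>A \<Phi>. small A \<longrightarrow> \<Phi> \<subseteq> fmls A 1 \<longrightarrow>
        (\<forall>F. F \<subseteq> \<Phi> \<longrightarrow> finite F \<longrightarrow> (\<exists>x. \<forall>\<phi>\<in>F. sat M UNIV (tenv [x]) \<phi>)) \<longrightarrow>
        (\<exists>x. \<forall>\<phi>\<in>\<Phi>. sat M UNIV (tenv [x]) \<phi>))"

definition complete_type :: "'a pres_struct \<Rightarrow> 'a set \<Rightarrow> nat \<Rightarrow> 'a fm set \<Rightarrow> bool" where
  "complete_type M A n p \<longleftrightarrow> p \<subseteq> fmls A n \<and>
     (\<forall>F. F \<subseteq> p \<longrightarrow> finite F \<longrightarrow> (\<exists>b. length b = n \<and> (\<forall>\<phi>\<in>F. sat M UNIV (tenv b) \<phi>))) \<and>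
     (\<forall>\<phi>\<in>fmls A n. \<phi> \<in> p \<or> Neg \<phi> \<in> p)"

definition realizations :: "'a pres_struct \<Rightarrow> nat \<Rightarrow> 'a fm set \<Rightarrow> 'a list set" where
  "realizations M n p = {b. length b = n \<and> (\<forall>\<phi>\<in>p. sat M UNIV (tenv b) \<phi>)}"

definition tp :: "'a pres_struct \<Rightarrow> 'a set \<Rightarrow> 'a list \<Rightarrow> 'a fm set" where
  "tp M A b = {\<phi> \<in> fmls A (length b). sat M UNIV (tenv b) \<phi>}"

definition dcl :: "'a pres_struct \<Rightarrow> 'a set \<Rightarrow> 'a set" where
  "dcl M A = {y. \<exists>\<phi>\<in>fmls A 1. {x. sat M UNIV (tenv [x]) \<phi>} = {y}}"

definition dcl_indep :: "'a pres_struct \<Rightarrow> 'a set \<Rightarrow> 'a set \<Rightarrow> bool" where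
  "dcl_indep M A S \<longleftrightarrow> (\<forall>s\<in>S. s \<notin> dcl M (A \<union> (S - {s})))"

definition has_dim :: "'a pres_struct \<Rightarrow> 'a set \<Rightarrow> 'a list \<Rightarrow> nat \<Rightarrow> bool" where
  "has_dim M A c d \<longleftrightarrow>
     (\<exists>S. S \<subseteq> set c \<and> dcl_indep M A S \<and>
          (\<forall>T. S \<subset> T \<longrightarrow> T \<subseteq> set c \<longrightarrow> \<not> dcl_indep M A T) \<and> card S = d)"

definition type_has_dim :: "'a pres_struct \<Rightarrow> 'a set \<Rightarrow> nat \<Rightarrow> 'a fm set \<Rightarrow> nat \<Rightarrow> bool" where
  "type_has_dim M A n p d \<longleftrightarrow> (\<forall>c\<in>realizations M n p. has_dim M A c d)"

text \<open>alpha restricted to P (a set of n-tuples) is the restriction of an A-definable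
  function M^n -> M (graph given by a formula in variables x_0..x_n).\<close>
definition rel_definable ::
  "'a pres_struct \<Rightarrow> 'a set \<Rightarrow> nat \<Rightarrow> 'a list set \<Rightarrow> ('a list \<Rightarrow> 'a) \<Rightarrow> bool" where
  "rel_definable M A n P \<alpha> \<longleftrightarrow>
     (\<exists>\<phi>\<in>fmls A (Suc n).
        (\<forall>b. length b = n \<longrightarrow> (\<exists>!y. sat M UNIV (tenv (b @ [y])) \<phi>)) \<and>
        (\<forall>b\<in>P. sat M UNIV (tenv (b @ [\<alpha> b])) \<phi>))"

definition non_algebraic :: "'a pres_struct \<Rightarrow> nat \<Rightarrow> 'a fm set \<Rightarrow> bool" where
  "non_algebraic M n q \<longleftrightarrow>
     (\<forall>\<phi>\<in>q. infinite {b. length b = n \<and> sat M UNIV (tenv b) \<phi>})"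

text \<open>Formulas of the language {<} (with equality): atoms only between variables and
  parameters, no function symbols or congruences.\<close>
fun simple_trm :: "'a trm \<Rightarrow> bool" where
  "simple_trm (Var v) = True"
| "simple_trm (Par c) = True"
| "simple_trm _ = False"

fun order_fm :: "'a fm \<Rightarrow> bool" where
  "order_fm (Eq t u) = (simple_trm t \<and> simple_trm u)"
| "order_fm (Less t u) = (simple_trm t \<and> simple_trm u)"
| "order_fm (Cong k t u) = False"
| "order_fm (Neg f) = order_fm f"
| "order_fm (Conj f g) = (order_fm f \<and> order_fm g)"
| "order_fm (Ex v f) = order_fm f"

text \<open>x and y lie in the same A-cut: same type over A in the language {<}.\<close>
definition same_cut :: "'a pres_struct \<Rightarrow> 'a set \<Rightarrow> 'a \<Rightarrow> 'a \<Rightarrow> bool" where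
  "same_cut M A x y \<longleftrightarrow>
     (\<forall>\<phi>\<in>fmls A 1. order_fm \<phi> \<longrightarrow>
        (sat M UNIV (tenv [x]) \<phi> \<longleftrightarrow> sat M UNIV (tenv [y]) \<phi>))"

end

theory Submission
  imports Defs
begin

lemma small_fin: "\<not> finite B \<Longrightarrow> finite A \<Longrightarrow> (card_of A, card_of B) \<in> ordLess"
  by (metis Field_card_of card_of_Well_order finite_ordLess_infinite)

lemma small_Un: "small A \<Longrightarrow> finite B \<Longrightarrow> \<not> finite (UNIV::'a set) \<Longrightarrow> small (A \<union> (B::'a set))"
  unfolding small_def by (meson card_of_Un_ordLess_infinite small_fin)

definition Or :: "'a fm \<Rightarrow> 'a fm \<Rightarrow> 'a fm" where "Or f g = Neg (Conj (Neg f) (Neg g))"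
definition All :: "nat \<Rightarrow> 'a fm \<Rightarrow> 'a fm" where "All v f = Neg (Ex v (Neg f))"
definition Imp :: "'a fm \<Rightarrow> 'a fm \<Rightarrow> 'a fm" where "Imp f g = Neg (Conj f (Neg g))"
definition Lt :: "bool \<Rightarrow> 'a trm \<Rightarrow> 'a trm \<Rightarrow> 'a fm" where
  "Lt d t u = (if d then Less t u else Less u t)"
definition lessd :: "'a pres_struct \<Rightarrow> bool \<Rightarrow> 'a \<Rightarrow> 'a \<Rightarrow> bool" where
  "lessd S d x y = (if d then less S x y else less S y x)"

lemma sat_Or[simp]: "sat S D e (Or f g) = (sat S D e f \<or> sat S D e g)" by (simp add: Or_def)
lemma sat_All[simp]: "sat S D e (All v f) = (\<forall>x\<in>D. sat S D (e(v:=x)) f)" by (simp add: All_def)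
lemma sat_Imp[simp]: "sat S D e (Imp f g) = (sat S D e f \<longrightarrow> sat S D e g)" by (simp add: Imp_def)
lemma sat_Lt[simp]: "sat S D e (Lt d t u) = lessd S d (eval S e t) (eval S e u)"
  by (simp add: Lt_def lessd_def)
lemma fv_Or[simp]: "fv (Or f g) = fv f \<union> fv g" by (simp add: Or_def)
lemma fv_All[simp]: "fv (All v f) = fv f - {v}" by (simp add: All_def)
lemma fv_Imp[simp]: "fv (Imp f g) = fv f \<union> fv g" by (simp add: Imp_def)
lemma fv_Lt[simp]: "fv (Lt d t u) = fv_trm t \<union> fv_trm u" by (auto simp: Lt_def)
lemma set_Or[simp]: "set_fm (Or f g) = set_fm f \<union> set_fm g" by (simp add: Or_def)
lemma set_All[simp]: "set_fm (All v f) = set_fm f" by (simp add: All_def)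
lemma set_Imp[simp]: "set_fm (Imp f g) = set_fm f \<union> set_fm g" by (simp add: Imp_def)
lemma set_Lt[simp]: "set_fm (Lt d t u) = set_trm t \<union> set_trm u" by (auto simp: Lt_def)
lemma map_Or[simp]: "map_fm h (Or f g) = Or (map_fm h f) (map_fm h g)" by (simp add: Or_def)
lemma map_All[simp]: "map_fm h (All v f) = All v (map_fm h f)" by (simp add: All_def)
lemma map_Imp[simp]: "map_fm h (Imp f g) = Imp (map_fm h f) (map_fm h g)" by (simp add: Imp_def)
lemma map_Lt[simp]: "map_fm h (Lt d t u) = Lt d (map_trm h t) (map_trm h u)" by (simp add: Lt_def)
lemma order_Lt[simp]: "order_fm (Lt d t u) = (simple_trm t \<and> simple_trm u)" by (auto simp: Lt_def)

lemma eval_fv: "(\<forall>v\<in>fv_trm t. e v = e' v) \<Longrightarrow> eval S e t = eval S e' t"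
  by (induction t) auto

lemma sat_fv: "(\<forall>v\<in>fv f. e v = e' v) \<Longrightarrow> sat S D e f = sat S D e' f"
proof (induction f arbitrary: e e')
  case (Ex v f)
  have "\<And>x. sat S D (e(v:=x)) f = sat S D (e'(v:=x)) f" by (rule Ex.IH) (use Ex.prems in auto)
  then show ?case by (simp only: sat.simps)
next
  case (Eq t u) then show ?case using eval_fv[of t e e' S] eval_fv[of u e e' S] by auto
next
  case (Less t u) then show ?case using eval_fv[of t e e' S] eval_fv[of u e e' S] by auto
next
  case (Cong k t u) then show ?case using eval_fv[of t e e' S] eval_fv[of u e e' S] by auto
next
  case (Neg f) then show ?case by simp
next
  case (Conj f g)
  have "sat S D e f = sat S D e' f" using Conj.IH(1) Conj.prems by simp
  moreover have "sat S D e g = sat S D e' g" using Conj.IH(2) Conj.prems by simp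
  ultimately show ?case by simp
qed

lemma fv_map_trm[simp]: "fv_trm (map_trm h t) = fv_trm t" by (induction t) auto
lemma fv_map[simp]: "fv (map_fm h f) = fv f" by (induction f) auto

fun rn_t :: "(nat \<Rightarrow> nat) \<Rightarrow> 'a trm \<Rightarrow> 'a trm" where
  "rn_t s (Var v) = Var (s v)" | "rn_t s (Par c) = Par c" | "rn_t s Zero = Zero" | "rn_t s One = One"
| "rn_t s (Plus t u) = Plus (rn_t s t) (rn_t s u)" | "rn_t s (Minus t u) = Minus (rn_t s t) (rn_t s u)"

fun rn :: "(nat \<Rightarrow> nat) \<Rightarrow> 'a fm \<Rightarrow> 'a fm" where
  "rn s (Eq t u) = Eq (rn_t s t) (rn_t s u)" | "rn s (Less t u) = Less (rn_t s t) (rn_t s u)"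
| "rn s (Cong k t u) = Cong k (rn_t s t) (rn_t s u)" | "rn s (Neg f) = Neg (rn s f)"
| "rn s (Conj f g) = Conj (rn s f) (rn s g)" | "rn s (Ex v f) = Ex (s v) (rn s f)"

lemma eval_rn: "eval S e (rn_t s t) = eval S (e \<circ> s) t" by (induction t) auto

lemma sat_rn: "inj s \<Longrightarrow> sat S D e (rn s f) = sat S D (e \<circ> s) f"
proof (induction f arbitrary: e)
  case (Ex v f)
  have "\<And>x. (e(s v := x)) \<circ> s = (e \<circ> s)(v := x)"
    using Ex.prems by (auto simp: fun_eq_iff inj_eq)
  then show ?case by (simp only: rn.simps sat.simps Ex.IH[OF Ex.prems])
qed (auto simp: eval_rn)

lemma fv_rn_t: "fv_trm (rn_t s t) = s ` fv_trm t" by (induction t) auto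
lemma fv_rn: "inj s \<Longrightarrow> fv (rn s f) = s ` fv f"
  by (induction f) (auto simp: fv_rn_t inj_eq)
lemma set_rn_t[simp]: "set_trm (rn_t s t) = set_trm t" by (induction t) auto
lemma set_rn[simp]: "set_fm (rn s f) = set_fm f" by (induction f) auto
lemma map_rn_t[simp]: "map_trm h (rn_t s t) = rn_t s (map_trm h t)" by (induction t) auto
lemma map_rn[simp]: "map_fm h (rn s f) = rn s (map_fm h f)" by (induction f) auto
lemma order_rn[simp]: "order_fm (rn s f) = order_fm f"
proof (induction f)
  case (Eq t u) then show ?case by (cases t; cases u) auto
next
  case (Less t u) then show ?case by (cases t; cases u) auto
qed auto

definition sw :: "nat \<Rightarrow> nat \<Rightarrow> nat \<Rightarrow> nat" where
  "sw a b x = (if x = a then b else if x = b then a else x)"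
lemma inj_sw[simp]: "inj (sw a b)" by (auto simp: inj_on_def sw_def split: if_splits)

fun exs :: "nat list \<Rightarrow> 'a fm \<Rightarrow> 'a fm" where
  "exs [] f = f" | "exs (v # vs) f = Ex v (exs vs f)"

definition alls :: "nat list \<Rightarrow> 'a fm \<Rightarrow> 'a fm" where "alls vs f = Neg (exs vs (Neg f))"

lemma sat_exs: "sat S UNIV e (exs vs f) = (\<exists>e'. (\<forall>i. i \<notin> set vs \<longrightarrow> e' i = e i) \<and> sat S UNIV e' f)"
proof (induction vs arbitrary: e)
  case Nil
  have "\<And>e'. (\<forall>i. e' i = e i) \<Longrightarrow> e' = e" by auto
  then show ?case by auto
next
  case (Cons v vs)
  show ?case
  proof
    assume "sat S UNIV e (exs (v # vs) f)"
    then obtain x e' where "\<forall>i. i \<notin> set vs \<longrightarrow> e' i = (e(v:=x)) i" "sat S UNIV e' f"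
      using Cons by auto
    then show "\<exists>e'. (\<forall>i. i \<notin> set (v # vs) \<longrightarrow> e' i = e i) \<and> sat S UNIV e' f"
      by (intro exI[of _ e']) auto
  next
    assume "\<exists>e'. (\<forall>i. i \<notin> set (v # vs) \<longrightarrow> e' i = e i) \<and> sat S UNIV e' f"
    then obtain e' where e': "\<forall>i. i \<notin> set (v # vs) \<longrightarrow> e' i = e i" "sat S UNIV e' f" by blast
    then have "\<forall>i. i \<notin> set vs \<longrightarrow> e' i = (e(v := e' v)) i" by auto
    then have "sat S UNIV (e(v := e' v)) (exs vs f)" using Cons.IH e'(2) by blast
    then show "sat S UNIV e (exs (v # vs) f)" by (simp only: exs.simps sat.simps) blast
  qed
qed

lemma sat_alls: "sat S UNIV e (alls vs f) = (\<forall>e'. (\<forall>i. i \<notin> set vs \<longrightarrow> e' i = e i) \<longrightarrow> sat S UNIV e' f)"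
  by (auto simp: alls_def sat_exs)

lemma fv_exs[simp]: "fv (exs vs f) = fv f - set vs" by (induction vs) auto
lemma fv_alls[simp]: "fv (alls vs f) = fv f - set vs" by (simp add: alls_def)
lemma set_exs[simp]: "set_fm (exs vs f) = set_fm f" by (induction vs) auto
lemma set_alls[simp]: "set_fm (alls vs f) = set_fm f" by (simp add: alls_def)
lemma map_exs[simp]: "map_fm h (exs vs f) = exs vs (map_fm h f)" by (induction vs) auto
lemma map_alls[simp]: "map_fm h (alls vs f) = alls vs (map_fm h f)" by (simp add: alls_def)

lemma sat_exs_block:
  "sat S UNIV e (exs [k..<k+m] f) =
   (\<exists>d. length d = m \<and> sat S UNIV (\<lambda>i. if k \<le> i \<and> i < k + m then d ! (i - k) else e i) f)"
proof
  assume "sat S UNIV e (exs [k..<k+m] f)"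
  then obtain e' where e': "\<forall>i. i \<notin> set [k..<k+m] \<longrightarrow> e' i = e i" "sat S UNIV e' f"
    by (auto simp: sat_exs)
  define d where "d = map (\<lambda>i. e' (k + i)) [0..<m]"
  have "(\<lambda>i. if k \<le> i \<and> i < k + m then d ! (i - k) else e i) = e'"
  proof
    fix i show "(if k \<le> i \<and> i < k + m then d ! (i - k) else e i) = e' i"
    proof (cases "k \<le> i \<and> i < k + m")
      case True
      then have "i - k < m" by arith
      then have "d ! (i - k) = e' (k + (i - k))" unfolding d_def by simp
      moreover have "k + (i - k) = i" using True by simp
      ultimately show ?thesis using True by simp
    next
      case False then show ?thesis using e'(1) by auto
    qed
  qed
  then show "\<exists>d. length d = m \<and> sat S UNIV (\<lambda>i. if k \<le> i \<and> i < k + m then d ! (i - k) else e i) f"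
    using e'(2) by (intro exI[of _ d]) (simp add: d_def)
next
  assume "\<exists>d. length d = m \<and> sat S UNIV (\<lambda>i. if k \<le> i \<and> i < k + m then d ! (i - k) else e i) f"
  then obtain d where "sat S UNIV (\<lambda>i. if k \<le> i \<and> i < k + m then d ! (i - k) else e i) f" by blast
  then show "sat S UNIV e (exs [k..<k+m] f)"
  proof -
    let ?e = "(\<lambda>i. if k \<le> i \<and> i < k + m then d ! (i - k) else e i)"
    have "\<forall>i. i \<notin> set [k..<k+m] \<longrightarrow> ?e i = e i"
    proof (intro allI impI)
      fix i assume "i \<notin> set [k..<k+m]"
      then have "\<not> (k \<le> i \<and> i < k + m)" by simp
      then show "?e i = e i" by (rule if_not_P)
    qed
    then have "(\<forall>i. i \<notin> set [k..<k+m] \<longrightarrow> ?e i = e i) \<and> sat S UNIV ?e f"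
      using \<open>sat S UNIV ?e f\<close> by (rule conjI)
    then show ?thesis unfolding sat_exs by (rule exI[of _ ?e])
  qed
qed

fun conjL :: "'a fm list \<Rightarrow> 'a fm" where
  "conjL [] = Eq Zero Zero" | "conjL (f # fs) = Conj f (conjL fs)"

lemma sat_conjL[simp]: "sat S D e (conjL fs) = (\<forall>f\<in>set fs. sat S D e f)" by (induction fs) auto
lemma fv_conjL[simp]: "fv (conjL fs) = (\<Union>f\<in>set fs. fv f)" by (induction fs) auto
lemma set_conjL[simp]: "set_fm (conjL fs) = (\<Union>f\<in>set fs. set_fm f)" by (induction fs) auto

fun ab_t :: "('a \<Rightarrow> nat) \<Rightarrow> 'a trm \<Rightarrow> 'a trm" where
  "ab_t h (Var v) = Var v" | "ab_t h (Par c) = Var (h c)" | "ab_t h Zero = Zero" | "ab_t h One = One"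
| "ab_t h (Plus t u) = Plus (ab_t h t) (ab_t h u)" | "ab_t h (Minus t u) = Minus (ab_t h t) (ab_t h u)"

fun ab :: "('a \<Rightarrow> nat) \<Rightarrow> 'a fm \<Rightarrow> 'a fm" where
  "ab h (Eq t u) = Eq (ab_t h t) (ab_t h u)" | "ab h (Less t u) = Less (ab_t h t) (ab_t h u)"
| "ab h (Cong k t u) = Cong k (ab_t h t) (ab_t h u)" | "ab h (Neg f) = Neg (ab h f)"
| "ab h (Conj f g) = Conj (ab h f) (ab h g)" | "ab h (Ex v f) = Ex v (ab h f)"

fun bv :: "'a fm \<Rightarrow> nat set" where
  "bv (Eq t u) = {}" | "bv (Less t u) = {}" | "bv (Cong k t u) = {}" | "bv (Neg f) = bv f"
| "bv (Conj f g) = bv f \<union> bv g" | "bv (Ex v f) = insert v (bv f)"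

lemma finite_bv[simp]: "finite (bv f)" by (induction f) auto

lemma eval_ab: "(\<forall>c\<in>set_trm t. e (h c) = c) \<Longrightarrow> eval S e (ab_t h t) = eval S e t"
  by (induction t) auto

lemma sat_ab: "(\<forall>c\<in>set_fm f. e (h c) = c \<and> h c \<notin> bv f) \<Longrightarrow> sat S D e (ab h f) = sat S D e f"
proof (induction f arbitrary: e)
  case (Ex v f)
  have "\<And>x. sat S D (e(v:=x)) (ab h f) = sat S D (e(v:=x)) f"
    by (rule Ex.IH) (use Ex.prems in auto)
  then show ?case by (simp only: ab.simps sat.simps)
qed (auto simp: eval_ab)

lemma set_ab_t[simp]: "set_trm (ab_t h t) = {}" by (induction t) auto
lemma set_ab[simp]: "set_fm (ab h f) = {}" by (induction f) auto
lemma fv_ab_t: "fv_trm (ab_t h t) \<subseteq> fv_trm t \<union> h ` set_trm t" by (induction t) auto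
lemma fv_ab: "fv (ab h f) \<subseteq> fv f \<union> h ` set_fm f" proof (induction f)
  case (Eq t u) then show ?case using fv_ab_t[of h t] fv_ab_t[of h u] by auto
next
  case (Less t u) then show ?case using fv_ab_t[of h t] fv_ab_t[of h u] by auto
next
  case (Cong k t u) then show ?case using fv_ab_t[of h t] fv_ab_t[of h u] by auto
qed auto

section \<open>The least-element / unboundedness scheme\<close>

definition lbody :: "bool \<Rightarrow> 'a fm \<Rightarrow> 'a fm" where
  "lbody d f = Conj f (All 1 (Imp (rn (sw 0 1) f) (Neg (Lt d (Var 1) (Var 0)))))"

definition scheme :: "bool \<Rightarrow> 'a fm \<Rightarrow> 'a fm" where
  "scheme d f = Or (Neg (Ex 0 f)) (Or (Ex 0 (lbody d f)) (All 2 (Ex 0 (Conj f (Lt d (Var 0) (Var 2))))))"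

lemma map_lbody[simp]: "map_fm h (lbody d f) = lbody d (map_fm h f)" by (simp add: lbody_def)
lemma map_scheme[simp]: "map_fm h (scheme d f) = scheme d (map_fm h f)" by (simp add: scheme_def)
lemma set_lbody[simp]: "set_fm (lbody d f) = set_fm f" by (simp add: lbody_def)

lemma fv_lbody: "1 \<notin> fv f \<Longrightarrow> fv (lbody d f) \<subseteq> insert 0 (fv f)"
  by (auto simp: lbody_def fv_rn sw_def split: if_splits)

lemma fv_scheme: "1 \<notin> fv f \<Longrightarrow> fv (scheme d f) \<subseteq> fv f - {0}"
  using fv_lbody[of f d] by (auto simp: scheme_def)

lemma sat_lbody: "1 \<notin> fv f \<Longrightarrow>
  sat S UNIV e (lbody d f) = (sat S UNIV e f \<and> (\<forall>w. sat S UNIV (e(0:=w)) f \<longrightarrow> \<not> lessd S d w (e 0)))"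
proof -
  assume h: "1 \<notin> fv f"
  have "\<And>w. sat S UNIV (e(1:=w)) (rn (sw 0 1) f) = sat S UNIV (e(0:=w)) f"
  proof -
    fix w
    have "sat S UNIV (e(1:=w)) (rn (sw 0 1) f) = sat S UNIV ((e(1:=w)) \<circ> sw 0 1) f"
      by (simp add: sat_rn)
    also have "\<dots> = sat S UNIV (e(0:=w)) f"
      by (rule sat_fv) (use h in \<open>auto simp: sw_def\<close>)
    finally show "sat S UNIV (e(1:=w)) (rn (sw 0 1) f) = sat S UNIV (e(0:=w)) f" .
  qed
  then show ?thesis by (simp add: lbody_def)
qed

lemma sat_scheme: "1 \<notin> fv f \<Longrightarrow> 2 \<notin> fv f \<Longrightarrow>
  sat S UNIV e (scheme d f) =
   ((\<not> (\<exists>x. sat S UNIV (e(0:=x)) f)) \<or>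
    (\<exists>x. sat S UNIV (e(0:=x)) f \<and> (\<forall>w. sat S UNIV (e(0:=w)) f \<longrightarrow> \<not> lessd S d w x)) \<or>
    (\<forall>z. \<exists>x. sat S UNIV (e(0:=x)) f \<and> lessd S d x z))"
proof -
  assume h1: "1 \<notin> fv f" and h2: "2 \<notin> fv f"
  have a: "\<And>x z. sat S UNIV (e(2:=z, 0:=x)) f = sat S UNIV (e(0:=x)) f"
    by (rule sat_fv) (use h2 in auto)
  show ?thesis unfolding scheme_def using a by (simp add: sat_lbody[OF h1])
qed

lemma int_scheme: "(\<not> (\<exists>x::int. P x)) \<or> (\<exists>x. P x \<and> (\<forall>w. P w \<longrightarrow> \<not> w < x)) \<or> (\<forall>z. \<exists>x. P x \<and> x < z)"
proof (cases "\<forall>z. \<exists>x. P x \<and> x < z")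
  case False
  then obtain z where z: "\<forall>x. P x \<longrightarrow> \<not> x < z" by auto
  show ?thesis
  proof (cases "\<exists>x. P x")
    case True
    then obtain x where x: "P x" by auto
    define Q where "Q n = P (z + int n)" for n
    have "z \<le> x" using x z by force
    then have "z + int (nat (x - z)) = x" by simp
    then have "Q (nat (x - z))" using x by (simp add: Q_def)
    then have q: "Q (LEAST n. Q n)" by (rule LeastI)
    have "\<forall>w. P w \<longrightarrow> \<not> w < z + int (LEAST n. Q n)"
    proof (intro allI impI notI)
      fix w assume "P w" "w < z + int (LEAST n. Q n)"
      then have "Q (nat (w - z))" "nat (w - z) < (LEAST n. Q n)" using z by (auto simp: Q_def)
      then show False using not_less_Least by blast
    qed
    then show ?thesis using q by (auto simp: Q_def)
  qed auto
qed auto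

lemma int_scheme': "(\<not> (\<exists>x::int. P x)) \<or> (\<exists>x. P x \<and> (\<forall>w. P w \<longrightarrow> \<not> x < w)) \<or> (\<forall>z. \<exists>x. P x \<and> z < x)"
proof -
  have "(\<not> (\<exists>x::int. P (- x))) \<or> (\<exists>x. P (- x) \<and> (\<forall>w. P (- w) \<longrightarrow> \<not> w < x)) \<or> (\<forall>z. \<exists>x. P (- x) \<and> x < z)"
    by (rule int_scheme)
  then show ?thesis
  proof (elim disjE)
    assume "\<not> (\<exists>x::int. P (- x))"
    then have "\<not> (\<exists>x::int. P x)" by (metis minus_minus)
    then show ?thesis by blast
  next
    assume "\<exists>x. P (- x) \<and> (\<forall>w. P (- w) \<longrightarrow> \<not> w < x)"
    then obtain x where x: "P (- x)" "\<forall>w. P (- w) \<longrightarrow> \<not> w < x" by blast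
    have "\<forall>w. P w \<longrightarrow> \<not> - x < w"
    proof (intro allI impI)
      fix w assume "P w" then have "P (- (- w))" by simp
      then have "\<not> (- w) < x" using x(2) by blast
      then show "\<not> - x < w" by linarith
    qed
    then show ?thesis using x(1) by blast
  next
    assume a: "\<forall>z. \<exists>x. P (- x) \<and> x < z"
    have "\<forall>z. \<exists>x. P x \<and> z < x"
    proof
      fix z obtain x where "P (- x)" "x < - z" using a by blast
      then show "\<exists>x. P x \<and> z < x" by (intro exI[of _ "- x"]) auto
    qed
    then show ?thesis by blast
  qed
qed

lemma Z_scheme: "1 \<notin> fv (f::int fm) \<Longrightarrow> 2 \<notin> fv f \<Longrightarrow> sat Zstruct UNIV e (scheme d f)"
proof -
  assume h: "1 \<notin> fv f" "2 \<notin> fv f"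
  have l: "lessd Zstruct d = (if d then (<) else (>))" by (auto simp: lessd_def Zstruct_def fun_eq_iff)
  show ?thesis
  proof (cases d)
    case True then show ?thesis using int_scheme[of "\<lambda>x. sat Zstruct UNIV (e(0:=x)) f"] h
      by (simp add: sat_scheme lessd_def Zstruct_def)
  next
    case False then show ?thesis using int_scheme'[of "\<lambda>x. sat Zstruct UNIV (e(0:=x)) f"] h
      by (simp add: sat_scheme lessd_def Zstruct_def)
  qed
qed

lemma transfer: "presburger_model M \<Longrightarrow> set_fm s = {} \<Longrightarrow> fv s = {} \<Longrightarrow>
  sat Zstruct UNIV (\<lambda>_. 0) (map_fm (\<lambda>_. 0) s) \<Longrightarrow> sat M UNIV (\<lambda>_. zero M) s"
  unfolding presburger_model_def by blast

lemma M_irr: "presburger_model M \<Longrightarrow> \<not> less M x x"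
proof -
  assume pm: "presburger_model M"
  have "sat M UNIV (\<lambda>_. zero M) (All 0 (Neg (Less (Var 0) (Var 0))))"
    apply (rule transfer[OF pm])
      apply simp
     apply (simp add: insert_Diff_if)
    apply (simp add: Zstruct_def)
    apply (use less_linear in blast)?
    done
  then show ?thesis by simp
qed

lemma M_tri: "presburger_model M \<Longrightarrow> less M x y \<or> x = y \<or> less M y x"
proof -
  assume pm: "presburger_model M"
  have "sat M UNIV (\<lambda>_. zero M) (All 0 (All 1 (Or (Less (Var 0) (Var 1)) (Or (Eq (Var 0) (Var 1)) (Less (Var 1) (Var 0))))))"
    apply (rule transfer[OF pm])
      apply simp
     apply (simp add: insert_Diff_if)
    apply (simp add: Zstruct_def)
    apply (use less_linear in blast)?
    done
  then show ?thesis by simp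
qed

lemma M_trans: "presburger_model M \<Longrightarrow> less M x y \<Longrightarrow> less M y z \<Longrightarrow> less M x z"
proof -
  assume pm: "presburger_model M" and xy: "less M x y" and yz: "less M y z"
  have "sat M UNIV (\<lambda>_. zero M) (All 0 (All 1 (All 2 (Imp (Conj (Less (Var 0) (Var 1)) (Less (Var 1) (Var 2))) (Less (Var 0) (Var 2))))))"
    apply (rule transfer[OF pm])
      apply simp
     apply (simp add: insert_Diff_if)
    apply (simp add: Zstruct_def)
    apply (use less_linear in blast)?
    done
  then have "sat M UNIV ((\<lambda>_. zero M)(0:=x, 1:=y, 2:=z)) (Imp (Conj (Less (Var 0) (Var 1)) (Less (Var 1) (Var 2))) (Less (Var 0) (Var 2)))"
    by (simp only: sat_All) blast
  then show ?thesis using xy yz by simp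
qed

lemma d_irr: "presburger_model M \<Longrightarrow> \<not> lessd M d x x" by (simp add: lessd_def M_irr)
lemma d_tri: "presburger_model M \<Longrightarrow> lessd M d x y \<or> x = y \<or> lessd M d y x"
  using M_tri[of M x y] by (auto simp: lessd_def)
lemma d_trans: "presburger_model M \<Longrightarrow> lessd M d x y \<Longrightarrow> lessd M d y z \<Longrightarrow> lessd M d x z"
  using M_trans by (auto simp: lessd_def split: if_splits)

lemma d_min: assumes pm: "presburger_model M"
  shows "finite Y \<Longrightarrow> Y \<noteq> {} \<Longrightarrow> \<exists>m\<in>Y. \<forall>y\<in>Y. y = m \<or> lessd M d m y"
proof (induction Y rule: finite_ne_induct)
  case (singleton x) then show ?case by auto
next
  case (insert x F)
  obtain m where m: "m \<in> F" "\<forall>y\<in>F. y = m \<or> lessd M d m y" using insert.IH by blast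
  show ?case
  proof (cases "lessd M d x m")
    case True
    have "\<forall>y\<in>insert x F. y = x \<or> lessd M d x y"
    proof
      fix y assume "y \<in> insert x F"
      then consider "y = x" | "y = m" | "lessd M d m y" using m by blast
      then show "y = x \<or> lessd M d x y"
      proof cases
        case 3 then show ?thesis using d_trans[OF pm True] by blast
      qed (use True in auto)
    qed
    then show ?thesis by blast
  next
    case False
    then have "x = m \<or> lessd M d m x" using d_tri[OF pm] by blast
    then show ?thesis using m by blast
  qed
qed


fun sb_t :: "(nat \<Rightarrow> 'a option) \<Rightarrow> 'a trm \<Rightarrow> 'a trm" where
  "sb_t g (Var v) = (case g v of Some c \<Rightarrow> Par c | None \<Rightarrow> Var v)" | "sb_t g (Par c) = Par c"
| "sb_t g Zero = Zero" | "sb_t g One = One"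
| "sb_t g (Plus t u) = Plus (sb_t g t) (sb_t g u)" | "sb_t g (Minus t u) = Minus (sb_t g t) (sb_t g u)"

fun sb :: "(nat \<Rightarrow> 'a option) \<Rightarrow> 'a fm \<Rightarrow> 'a fm" where
  "sb g (Eq t u) = Eq (sb_t g t) (sb_t g u)" | "sb g (Less t u) = Less (sb_t g t) (sb_t g u)"
| "sb g (Cong k t u) = Cong k (sb_t g t) (sb_t g u)" | "sb g (Neg f) = Neg (sb g f)"
| "sb g (Conj f h) = Conj (sb g f) (sb g h)" | "sb g (Ex v f) = Ex v (sb (g(v:=None)) f)"

definition senv :: "(nat \<Rightarrow> 'a option) \<Rightarrow> (nat \<Rightarrow> 'a) \<Rightarrow> nat \<Rightarrow> 'a" where
  "senv g e i = (case g i of Some c \<Rightarrow> c | None \<Rightarrow> e i)"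

lemma eval_sb: "eval S e (sb_t g t) = eval S (senv g e) t"
  by (induction t) (auto simp: senv_def split: option.split)

lemma sat_sb: "sat S D e (sb g f) = sat S D (senv g e) f"
proof (induction f arbitrary: g e)
  case (Ex v f)
  have "\<And>x. senv (g(v:=None)) (e(v:=x)) = (senv g e)(v:=x)"
    by (auto simp: senv_def fun_eq_iff split: option.split)
  then have "\<And>x. sat S D (e(v:=x)) (sb (g(v:=None)) f) = sat S D ((senv g e)(v:=x)) f"
    using Ex.IH by metis
  then show ?case by (simp only: sb.simps sat.simps)
qed (auto simp: eval_sb)

lemma fv_sb_t: "fv_trm (sb_t g t) = fv_trm t - {i. g i \<noteq> None}"
  by (induction t) (auto split: option.split)

lemma fv_sb: "fv (sb g f) = fv f - {i. g i \<noteq> None}"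
proof (induction f arbitrary: g)
  case (Ex v f) then show ?case by auto
qed (auto simp: fv_sb_t)

lemma set_sb_t: "set_trm (sb_t g t) \<subseteq> set_trm t \<union> {c. \<exists>i. g i = Some c}"
  by (induction t) (auto split: option.split)

lemma set_sb: "set_fm (sb g f) \<subseteq> set_fm f \<union> {c. \<exists>i. g i = Some c}"
proof (induction f arbitrary: g)
  case (Eq t u) then show ?case using set_sb_t[of g t] set_sb_t[of g u] by auto
next
  case (Less t u) then show ?case using set_sb_t[of g t] set_sb_t[of g u] by auto
next
  case (Cong k t u) then show ?case using set_sb_t[of g t] set_sb_t[of g u] by auto
next
  case (Neg f) then show ?case by simp
next
  case (Conj f h)
  have "set_fm (sb g (Conj f h)) = set_fm (sb g f) \<union> set_fm (sb g h)" by simp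
  also have "\<dots> \<subseteq> (set_fm f \<union> {c. \<exists>i. g i = Some c}) \<union> (set_fm h \<union> {c. \<exists>i. g i = Some c})"
    using Conj.IH by (rule Un_mono)
  finally show ?case by auto
next
  case (Ex v f)
  have "{c. \<exists>i. (g(v:=None)) i = Some c} \<subseteq> {c. \<exists>i. g i = Some c}" by (auto split: if_splits)
  then have "set_fm f \<union> {c. \<exists>i. (g(v:=None)) i = Some c} \<subseteq> set_fm f \<union> {c. \<exists>i. g i = Some c}"
    by (rule Un_mono[OF order_refl])
  then have "set_fm (sb (g(v:=None)) f) \<subseteq> set_fm f \<union> {c. \<exists>i. g i = Some c}"
    using Ex.IH[of "g(v:=None)"] by (rule order_trans[rotated])
  then show ?case by simp
qed

section \<open>Realizing n-types\<close>

lemma tenv_nth: "tenv b i = b ! i" by (simp add: tenv_def)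

lemma nsat_key:
  assumes k: "k < n" and lc: "length c = k" and fvL: "\<forall>f\<in>set L. fv f \<subseteq> {..<n}"
  shows "sat M UNIV (tenv [x])
           (rn (sw 0 k) (sb (\<lambda>i. if i < k then Some (c ! i) else None)
              (exs [Suc k..<Suc k + (n - Suc k)] (conjL L))))
       = (\<exists>d. length d = n - Suc k \<and> (\<forall>f\<in>set L. sat M UNIV (tenv (c @ x # d)) f))"
proof -
  define g where "g = (\<lambda>i. if i < k then Some (c ! i) else None)"
  define m where "m = n - Suc k"
  define e1 where "e1 = senv g (tenv [x] \<circ> sw 0 k)"
  have "sat M UNIV (tenv [x]) (rn (sw 0 k) (sb g (exs [Suc k..<Suc k + m] (conjL L))))
      = sat M UNIV e1 (exs [Suc k..<Suc k + m] (conjL L))"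
    by (simp add: sat_rn sat_sb e1_def)
  also have "\<dots> = (\<exists>d. length d = m \<and> sat M UNIV (\<lambda>i. if Suc k \<le> i \<and> i < Suc k + m then d ! (i - Suc k) else e1 i) (conjL L))"
    by (rule sat_exs_block)
  also have "\<dots> = (\<exists>d. length d = m \<and> (\<forall>f\<in>set L. sat M UNIV (tenv (c @ x # d)) f))"
  proof -
    have "\<And>d. length d = m \<Longrightarrow> sat M UNIV (\<lambda>i. if Suc k \<le> i \<and> i < Suc k + m then d ! (i - Suc k) else e1 i) (conjL L)
            = sat M UNIV (tenv (c @ x # d)) (conjL L)"
    proof -
      fix d :: "'a list" assume ld: "length d = m"
      show "sat M UNIV (\<lambda>i. if Suc k \<le> i \<and> i < Suc k + m then d ! (i - Suc k) else e1 i) (conjL L)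
            = sat M UNIV (tenv (c @ x # d)) (conjL L)"
      proof (rule sat_fv, intro ballI)
        fix v assume "v \<in> fv (conjL L)"
        then have vn: "v < n" using fvL by auto
        show "(if Suc k \<le> v \<and> v < Suc k + m then d ! (v - Suc k) else e1 v) = tenv (c @ x # d) v"
        proof (cases "v < k")
          case True
          then show ?thesis using lc by (simp add: e1_def senv_def g_def tenv_nth nth_append)
        next
          case False
          show ?thesis
          proof (cases "v = k")
            case True
            then show ?thesis using lc by (simp add: e1_def senv_def g_def tenv_nth nth_append sw_def)
          next
            case False
            with \<open>\<not> v < k\<close> have "Suc k \<le> v" "v < Suc k + m" using vn k by (auto simp: m_def)
            moreover have "v - k = Suc (v - Suc k)" using \<open>Suc k \<le> v\<close> by arith
            ultimately show ?thesis using lc by (simp add: tenv_nth nth_append)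
          qed
        qed
      qed
    qed
    then have H: "\<And>d. length d = m \<Longrightarrow> sat M UNIV (\<lambda>i. if Suc k \<le> i \<and> i < Suc k + m then d ! (i - Suc k) else e1 i) (conjL L)
            = (\<forall>f\<in>set L. sat M UNIV (tenv (c @ x # d)) f)" by (simp only: sat_conjL)
    show ?thesis
    proof
      assume "\<exists>d. length d = m \<and> sat M UNIV (\<lambda>i. if Suc k \<le> i \<and> i < Suc k + m then d ! (i - Suc k) else e1 i) (conjL L)"
      then obtain d where "length d = m" "sat M UNIV (\<lambda>i. if Suc k \<le> i \<and> i < Suc k + m then d ! (i - Suc k) else e1 i) (conjL L)" by blast
      then show "\<exists>d. length d = m \<and> (\<forall>f\<in>set L. sat M UNIV (tenv (c @ x # d)) f)" using H by blast
    next
      assume "\<exists>d. length d = m \<and> (\<forall>f\<in>set L. sat M UNIV (tenv (c @ x # d)) f)"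
      then obtain d where "length d = m" "\<forall>f\<in>set L. sat M UNIV (tenv (c @ x # d)) f" by blast
      then show "\<exists>d. length d = m \<and> sat M UNIV (\<lambda>i. if Suc k \<le> i \<and> i < Suc k + m then d ! (i - Suc k) else e1 i) (conjL L)"
        using H by blast
    qed
  qed
  finally show ?thesis unfolding g_def m_def .
qed

lemma nsat:
  assumes satd: "saturated M" and sm: "small A" and inf: "\<not> finite (UNIV::'a set)"
    and G: "\<Gamma> \<subseteq> fmls A n"
    and fs: "\<forall>F. F \<subseteq> \<Gamma> \<longrightarrow> finite F \<longrightarrow> (\<exists>b. length b = n \<and> (\<forall>\<phi>\<in>F. sat M UNIV (tenv b) \<phi>))"
  shows "\<exists>c::'a list. length c = n \<and> (\<forall>\<phi>\<in>\<Gamma>. sat M UNIV (tenv c) \<phi>)"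
proof -
  have fvG: "\<And>f. f \<in> \<Gamma> \<Longrightarrow> fv f \<subseteq> {..<n}" and parG: "\<And>f. f \<in> \<Gamma> \<Longrightarrow> set_fm f \<subseteq> A"
    using G by (auto simp: fmls_def)
  have step: "k \<le> n \<Longrightarrow> \<exists>c::'a list. length c = k \<and> (\<forall>F. F \<subseteq> \<Gamma> \<longrightarrow> finite F \<longrightarrow>
      (\<exists>d. length d = n - k \<and> (\<forall>\<phi>\<in>F. sat M UNIV (tenv (c @ d)) \<phi>)))" for k
  proof (induction k)
    case 0
    then show ?case using fs by (intro exI[of _ "[]"]) simp
  next
    case (Suc k)
    then have k: "k < n" by simp
    obtain c :: "'a list" where lc: "length c = k" and c: "\<forall>F. F \<subseteq> \<Gamma> \<longrightarrow> finite F \<longrightarrow>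
      (\<exists>d. length d = n - k \<and> (\<forall>\<phi>\<in>F. sat M UNIV (tenv (c @ d)) \<phi>))"
      using Suc.IH Suc.prems by auto
    define \<chi> where "\<chi> L = rn (sw 0 k) (sb (\<lambda>i. if i < k then Some (c ! i) else None)
              (exs [Suc k..<Suc k + (n - Suc k)] (conjL L)))" for L
    have key: "\<And>L x. set L \<subseteq> \<Gamma> \<Longrightarrow> sat M UNIV (tenv [x]) (\<chi> L) =
       (\<exists>d. length d = n - Suc k \<and> (\<forall>f\<in>set L. sat M UNIV (tenv (c @ x # d)) f))"
    proof -
      fix L x assume "set L \<subseteq> \<Gamma>"
      then have "\<forall>f\<in>set L. fv f \<subseteq> {..<n}" using fvG by auto
      then show "sat M UNIV (tenv [x]) (\<chi> L) =
       (\<exists>d. length d = n - Suc k \<and> (\<forall>f\<in>set L. sat M UNIV (tenv (c @ x # d)) f))"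
        unfolding \<chi>_def by (rule nsat_key[OF k lc])
    qed
    define \<Phi> where "\<Phi> = \<chi> ` {L. set L \<subseteq> \<Gamma>}"
    have inF: "\<Phi> \<subseteq> fmls (A \<union> set c) 1"
    proof
      fix f assume "f \<in> \<Phi>"
      then obtain L where L: "set L \<subseteq> \<Gamma>" "f = \<chi> L" by (auto simp: \<Phi>_def)
      let ?g = "(\<lambda>i. if i < k then Some (c ! i) else None)"
      let ?E = "exs [Suc k..<Suc k + (n - Suc k)] (conjL L)"
      have "set_fm (sb ?g ?E) \<subseteq> set_fm ?E \<union> {a. \<exists>i. ?g i = Some a}" by (rule set_sb)
      moreover have "set_fm ?E \<subseteq> A" using L parG by (simp only: set_exs set_conjL) blast
      moreover have "{a. \<exists>i. ?g i = Some a} \<subseteq> set c" using lc by (auto split: if_splits)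
      moreover have "set_fm f = set_fm (sb ?g ?E)" unfolding L(2) \<chi>_def by (rule set_rn)
      ultimately have s: "set_fm f \<subseteq> A \<union> set c" by blast
      have "fv (conjL L) \<subseteq> {..<n}" using L fvG by (simp only: fv_conjL) blast
      then have "fv ?E \<subseteq> {..<n} - {Suc k..<Suc k + (n - Suc k)}" by (simp only: fv_exs set_upt) blast
      then have "fv (sb ?g ?E) \<subseteq> {k}" unfolding fv_sb by auto
      then have "fv f \<subseteq> {0}" unfolding L(2) \<chi>_def fv_rn[OF inj_sw] by (auto simp: sw_def)
      then show "f \<in> fmls (A \<union> set c) 1" using s by (auto simp: fmls_def)
    qed
    have smc: "small (A \<union> set c)" using small_Un[OF sm _ inf] by simp
    have fsat: "\<forall>F. F \<subseteq> \<Phi> \<longrightarrow> finite F \<longrightarrow> (\<exists>x. \<forall>\<phi>\<in>F. sat M UNIV (tenv [x]) \<phi>)"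
    proof (intro allI impI)
      fix F assume FP: "F \<subseteq> \<Phi>" and fF: "finite F"
      obtain Ls where Ls: "Ls \<subseteq> {L. set L \<subseteq> \<Gamma>}" "finite Ls" "F = \<chi> ` Ls"
        using finite_subset_image[OF fF FP[unfolded \<Phi>_def]] by blast
      define F0 where "F0 = (\<Union>L\<in>Ls. set L)"
      have "F0 \<subseteq> \<Gamma>" "finite F0" using Ls by (auto simp: F0_def)
      then obtain d where d: "length d = n - k" "\<forall>\<phi>\<in>F0. sat M UNIV (tenv (c @ d)) \<phi>" using c by blast
      then obtain x d' where xd: "d = x # d'" using k by (cases d) auto
      have ld': "length d' = n - Suc k" using d(1) xd by simp
      have "\<forall>\<phi>\<in>F. sat M UNIV (tenv [x]) \<phi>"
      proof
        fix \<phi> assume "\<phi> \<in> F"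
        then obtain L where L: "L \<in> Ls" "\<phi> = \<chi> L" using Ls by blast
        have "\<forall>f\<in>set L. sat M UNIV (tenv (c @ x # d')) f" using d(2) xd L(1) by (auto simp: F0_def)
        then show "sat M UNIV (tenv [x]) \<phi>" using key[of L x] L Ls(1) ld' by blast
      qed
      then show "\<exists>x. \<forall>\<phi>\<in>F. sat M UNIV (tenv [x]) \<phi>" by blast
    qed
    obtain x where x: "\<forall>\<phi>\<in>\<Phi>. sat M UNIV (tenv [x]) \<phi>"
      using satd[unfolded saturated_def, rule_format, OF smc inF fsat[rule_format]] by blast
    have "\<forall>F. F \<subseteq> \<Gamma> \<longrightarrow> finite F \<longrightarrow>
      (\<exists>d. length d = n - Suc k \<and> (\<forall>\<phi>\<in>F. sat M UNIV (tenv ((c @ [x]) @ d)) \<phi>))"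
    proof (intro allI impI)
      fix F assume "F \<subseteq> \<Gamma>" "finite F"
      then obtain L where L: "set L = F" using finite_list by blast
      then have "\<chi> L \<in> \<Phi>" using \<open>F \<subseteq> \<Gamma>\<close> by (auto simp: \<Phi>_def)
      then have "sat M UNIV (tenv [x]) (\<chi> L)" using x by blast
      then show "\<exists>d. length d = n - Suc k \<and> (\<forall>\<phi>\<in>F. sat M UNIV (tenv ((c @ [x]) @ d)) \<phi>)"
        using key[of L x] L \<open>F \<subseteq> \<Gamma>\<close> by simp
    qed
    then show ?case using lc by (intro exI[of _ "c @ [x]"]) simp
  qed
  obtain c :: "'a list" where c: "length c = n" "\<forall>F. F \<subseteq> \<Gamma> \<longrightarrow> finite F \<longrightarrow>
      (\<exists>d. length d = n - n \<and> (\<forall>\<phi>\<in>F. sat M UNIV (tenv (c @ d)) \<phi>))"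
    using step[of n] by blast
  have "\<forall>\<phi>\<in>\<Gamma>. sat M UNIV (tenv c) \<phi>"
  proof
    fix \<phi> assume "\<phi> \<in> \<Gamma>"
    then obtain d where "length d = 0" "sat M UNIV (tenv (c @ d)) \<phi>" using c(2)[rule_format, of "{\<phi>}"] by auto
    then show "sat M UNIV (tenv c) \<phi>" by simp
  qed
  then show ?thesis using c(1) by blast
qed

section \<open>Coinitiality of a non-algebraic type in its cut\<close>

lemma set_scheme[simp]: "set_fm (scheme d f) = set_fm f" by (simp add: scheme_def)

lemma fv_tenv1: "fv \<psi> \<subseteq> {0} \<Longrightarrow> e 0 = x \<Longrightarrow> sat M UNIV e \<psi> = sat M UNIV (tenv [x]) \<psi>"
  by (rule sat_fv) (auto simp: tenv_def)

lemma coinit: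
  assumes pm: "presburger_model M" and es: "elem_sub M M0"
    and psi: "\<psi> \<in> fmls M0 1" and pt: "sat M UNIV (tenv [t]) \<psi>" and tM0: "t \<notin> M0"
    and fin: "finite Y" and cut: "\<forall>y\<in>Y. same_cut M M0 y t"
  shows "\<exists>b. sat M UNIV (tenv [b]) \<psi> \<and> (\<forall>y\<in>Y. lessd M d b y)"
proof -
  have fvp: "fv \<psi> \<subseteq> {0}" and parp: "set_fm \<psi> \<subseteq> M0" using psi by (auto simp: fmls_def)
  define P where "P x = sat M UNIV (tenv [x]) \<psi>" for x
  have Pe: "\<And>e x. e 0 = x \<Longrightarrow> sat M UNIV e \<psi> = P x" unfolding P_def using fvp by (rule fv_tenv1)
  obtain N where N: "\<forall>v\<in>bv \<psi>. v < N" using finite_nat_set_iff_bounded finite_bv by blast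
  obtain f :: "'a \<Rightarrow> nat" and k where f: "inj_on f (set_fm \<psi>)"
    using finite_imp_inj_to_nat_seg[of "set_fm \<psi>"] by auto
  define h where "h c = N + 3 + f c" for c
  have hinj: "inj_on h (set_fm \<psi>)" using f by (auto simp: inj_on_def h_def)
  define H where "H = h ` set_fm \<psi>"
  define \<chi> where "\<chi> = ab h \<psi>"
  have fvc: "fv \<chi> \<subseteq> {0} \<union> H" using fv_ab[of h \<psi>] fvp unfolding \<chi>_def H_def by blast
  have H3: "\<forall>i\<in>H. 3 \<le> i" by (auto simp: H_def h_def)
  have c1: "1 \<notin> fv \<chi>" and c2: "2 \<notin> fv \<chi>" using fvc H3 by force+
  define vs where "vs = sorted_list_of_set H"
  have svs: "set vs = H" unfolding vs_def H_def by simp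
  have "sat M UNIV (\<lambda>_. zero M) (alls vs (scheme d \<chi>))"
  proof (rule transfer[OF pm])
    show "set_fm (alls vs (scheme d \<chi>)) = {}" by (simp add: \<chi>_def)
    have "fv (scheme d \<chi>) \<subseteq> fv \<chi> - {0}" by (rule fv_scheme[OF c1])
    then show "fv (alls vs (scheme d \<chi>)) = {}" using fvc svs by auto
    have "\<forall>e'. sat Zstruct UNIV e' (scheme d (map_fm (\<lambda>_. 0) \<chi>))"
      using Z_scheme c1 c2 by simp
    then show "sat Zstruct UNIV (\<lambda>_. 0) (map_fm (\<lambda>_. 0) (alls vs (scheme d \<chi>)))"
      by (simp add: sat_alls)
  qed
  define e0 where "e0 i = (if i \<in> H then inv_into (set_fm \<psi>) h i else zero M)" for i
  have "sat M UNIV e0 (scheme d \<chi>)"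
    using \<open>sat M UNIV (\<lambda>_. zero M) (alls vs (scheme d \<chi>))\<close> unfolding sat_alls
    by (simp add: e0_def svs)
  have chiP: "sat M UNIV (e0(0:=x)) \<chi> = P x" for x
  proof -
    have "\<forall>c\<in>set_fm \<psi>. (e0(0:=x)) (h c) = c \<and> h c \<notin> bv \<psi>"
    proof
      fix c assume c: "c \<in> set_fm \<psi>"
      have "h c \<noteq> 0" "h c \<in> H" "N \<le> h c" using c by (auto simp: h_def H_def)
      then show "(e0(0:=x)) (h c) = c \<and> h c \<notin> bv \<psi>"
        using c hinj N by (auto simp: e0_def)
    qed
    then have "sat M UNIV (e0(0:=x)) \<chi> = sat M UNIV (e0(0:=x)) \<psi>" unfolding \<chi>_def by (rule sat_ab)
    then show ?thesis using Pe by simp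
  qed
  have disj: "(\<not> (\<exists>x. P x)) \<or> (\<exists>x. P x \<and> (\<forall>w. P w \<longrightarrow> \<not> lessd M d w x)) \<or> (\<forall>z. \<exists>x. P x \<and> lessd M d x z)"
    using \<open>sat M UNIV e0 (scheme d \<chi>)\<close> by (simp add: sat_scheme[OF c1 c2] chiP)
  have Pt: "P t" using pt by (simp add: P_def)
  show ?thesis
  proof (cases "\<forall>z. \<exists>x. P x \<and> lessd M d x z")
    case True
    show ?thesis
    proof (cases "Y = {}")
      case True then show ?thesis using pt by blast
    next
      case False
      obtain m where m: "m \<in> Y" "\<forall>y\<in>Y. y = m \<or> lessd M d m y" using d_min[OF pm fin False] by blast
      obtain x where x: "P x" "lessd M d x m" using \<open>\<forall>z. \<exists>x. P x \<and> lessd M d x z\<close> by blast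
      have "\<forall>y\<in>Y. lessd M d x y"
      proof
        fix y assume "y \<in> Y"
        then consider "y = m" | "lessd M d m y" using m by blast
        then show "lessd M d x y"
        proof cases
          case 1 then show ?thesis using x by simp
        next
          case 2 then show ?thesis using d_trans[OF pm x(2)] by blast
        qed
      qed
      then show ?thesis using x(1) unfolding P_def by blast
    qed
  next
    case False
    then obtain x0 where x0: "P x0" "\<forall>w. P w \<longrightarrow> \<not> lessd M d w x0" using disj Pt by blast
    obtain m0 where m0: "m0 \<in> M0" using es by (auto simp: elem_sub_def)
    define e1 where "e1 = (\<lambda>_::nat. m0)"
    have c1p: "1 \<notin> fv \<psi>" using fvp by auto
    have lb: "\<And>e. sat M UNIV e (lbody d \<psi>) = (P (e 0) \<and> (\<forall>w. P w \<longrightarrow> \<not> lessd M d w (e 0)))"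
    proof -
      fix e :: "nat \<Rightarrow> 'a"
      have "sat M UNIV e (lbody d \<psi>) = (sat M UNIV e \<psi> \<and> (\<forall>w. sat M UNIV (e(0:=w)) \<psi> \<longrightarrow> \<not> lessd M d w (e 0)))"
        by (rule sat_lbody[OF c1p])
      also have "\<dots> = (P (e 0) \<and> (\<forall>w. P w \<longrightarrow> \<not> lessd M d w (e 0)))" using Pe by simp
      finally show "sat M UNIV e (lbody d \<psi>) = (P (e 0) \<and> (\<forall>w. P w \<longrightarrow> \<not> lessd M d w (e 0)))" .
    qed
    have s1: "sat M UNIV e1 (Ex 0 (lbody d \<psi>))"
      using x0 by (simp add: lb, blast)
    have s2: "set_fm (Ex 0 (lbody d \<psi>)) \<subseteq> M0" using parp by simp
    have esr: "\<And>\<phi> e. set_fm \<phi> \<subseteq> M0 \<Longrightarrow> \<forall>v\<in>fv \<phi>. e v \<in> M0 \<Longrightarrow> sat M M0 e \<phi> = sat M UNIV e \<phi>"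
      using es by (simp add: elem_sub_def)
    have e1M: "\<forall>v\<in>fv (Ex 0 (lbody d \<psi>)). e1 v \<in> M0" using m0 by (simp add: e1_def)
    have "sat M M0 e1 (Ex 0 (lbody d \<psi>))"
      using esr[OF s2 e1M] s1 by simp
    then obtain x where xM: "x \<in> M0" and xs: "sat M M0 (e1(0:=x)) (lbody d \<psi>)" by auto
    have "set_fm (lbody d \<psi>) \<subseteq> M0" using parp by simp
    moreover have "\<forall>v\<in>fv (lbody d \<psi>). (e1(0:=x)) v \<in> M0" using m0 xM by (simp add: e1_def)
    ultimately have "sat M UNIV (e1(0:=x)) (lbody d \<psi>)"
      using esr xs by blast
    then have x: "P x" "\<forall>w. P w \<longrightarrow> \<not> lessd M d w x" by (simp_all add: lb)
    have "\<not> lessd M d t x" using x(2) Pt by blast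
    moreover have "t \<noteq> x" using xM tM0 by blast
    ultimately have xt: "lessd M d x t" using d_tri[OF pm, of d x t] by blast
    have "\<forall>y\<in>Y. lessd M d x y"
    proof
      fix y assume "y \<in> Y"
      then have sc: "same_cut M M0 y t" using cut by blast
      have "Lt d (Par x) (Var 0) \<in> fmls M0 1" using xM by (auto simp: fmls_def)
      moreover have "order_fm (Lt d (Par x) (Var 0))" by simp
      ultimately have "sat M UNIV (tenv [y]) (Lt d (Par x) (Var 0)) = sat M UNIV (tenv [t]) (Lt d (Par x) (Var 0))"
        using sc unfolding same_cut_def by blast
      then show "lessd M d x y" using xt by (simp add: tenv_def)
    qed
    then show ?thesis using x(1) unfolding P_def by blast
  qed
qed


lemma psi_sem:
  assumes fvg: "fv g \<subseteq> {..<Suc n}"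
  shows "sat M UNIV (tenv [x]) (rn (sw 0 n) (exs [0..<0+n] g)) = (\<exists>b. length b = n \<and> sat M UNIV (tenv (b @ [x])) g)"
proof -
  define e1 where "e1 = tenv [x] \<circ> sw 0 n"
  have "sat M UNIV (tenv [x]) (rn (sw 0 n) (exs [0..<0+n] g)) = sat M UNIV e1 (exs [0..<0+n] g)"
    by (simp add: sat_rn e1_def)
  also have "\<dots> = (\<exists>d. length d = n \<and> sat M UNIV (\<lambda>i. if 0 \<le> i \<and> i < 0 + n then d ! (i - 0) else e1 i) g)"
    by (rule sat_exs_block)
  finally have eq1: "sat M UNIV (tenv [x]) (rn (sw 0 n) (exs [0..<0+n] g)) = (\<exists>d. length d = n \<and> sat M UNIV (\<lambda>i. if 0 \<le> i \<and> i < 0 + n then d ! (i - 0) else e1 i) g)" .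
  have H: "\<And>d. length d = n \<Longrightarrow> sat M UNIV (\<lambda>i. if 0 \<le> i \<and> i < 0 + n then d ! (i - 0) else e1 i) g = sat M UNIV (tenv (d @ [x])) g"
  proof -
    fix d :: "'a list" assume ld: "length d = n"
    show "sat M UNIV (\<lambda>i. if 0 \<le> i \<and> i < 0 + n then d ! (i - 0) else e1 i) g = sat M UNIV (tenv (d @ [x])) g"
    proof (rule sat_fv, intro ballI)
      fix v assume "v \<in> fv g"
      then have "v < Suc n" using fvg by auto
      then consider "v < n" | "v = n" by linarith
      then show "(if 0 \<le> v \<and> v < 0 + n then d ! (v - 0) else e1 v) = tenv (d @ [x]) v"
      proof cases
        case 1 then show ?thesis using ld by (simp add: tenv_def nth_append)
      next
        case 2 then show ?thesis using ld by (simp add: tenv_def nth_append e1_def sw_def)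
      qed
    qed
  qed
  show ?thesis
  proof
    assume "sat M UNIV (tenv [x]) (rn (sw 0 n) (exs [0..<0+n] g))"
    then obtain d where "length d = n" "sat M UNIV (\<lambda>i. if 0 \<le> i \<and> i < 0 + n then d ! (i - 0) else e1 i) g"
      using eq1 by blast
    then show "\<exists>b. length b = n \<and> sat M UNIV (tenv (b @ [x])) g" using H by blast
  next
    assume "\<exists>b. length b = n \<and> sat M UNIV (tenv (b @ [x])) g"
    then obtain d where "length d = n" "sat M UNIV (tenv (d @ [x])) g" by blast
    then have "\<exists>d. length d = n \<and> sat M UNIV (\<lambda>i. if 0 \<le> i \<and> i < 0 + n then d ! (i - 0) else e1 i) g"
      using H by blast
    then show "sat M UNIV (tenv [x]) (rn (sw 0 n) (exs [0..<0+n] g))" using eq1 by blast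
  qed
qed

lemma theta_sem:
  assumes fva: "fv \<phi>a \<subseteq> {..<Suc n}" and fvd: "fv \<delta> \<subseteq> {0}" and lb: "length b = n"
  shows "sat M UNIV (tenv b) (Ex n (Ex (Suc n) (Conj \<phi>a (Conj (rn (sw 0 (Suc n)) \<delta>) (Lt d (Var n) (Var (Suc n)))))))
    = (\<exists>z w. sat M UNIV (tenv (b @ [z])) \<phi>a \<and> sat M UNIV (tenv [w]) \<delta> \<and> lessd M d z w)"
proof -
  define E where "E z w = (tenv b)(n:=z, Suc n:=w)" for z w
  have 0: "sat M UNIV (tenv b) (Ex n (Ex (Suc n) (Conj \<phi>a (Conj (rn (sw 0 (Suc n)) \<delta>) (Lt d (Var n) (Var (Suc n)))))))
    = (\<exists>z w. sat M UNIV (E z w) \<phi>a \<and> sat M UNIV (E z w) (rn (sw 0 (Suc n)) \<delta>) \<and> lessd M d (E z w n) (E z w (Suc n)))"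
    by (simp only: sat.simps sat_Lt eval.simps E_def bex_UNIV)
  have 1: "sat M UNIV (E z w) \<phi>a = sat M UNIV (tenv (b @ [z])) \<phi>a" for z w
  proof (rule sat_fv, intro ballI)
    fix v assume "v \<in> fv \<phi>a"
    then have "v < Suc n" using fva by auto
    then consider "v < n" | "v = n" by linarith
    then show "E z w v = tenv (b @ [z]) v"
    proof cases
      case 1 then show ?thesis using lb by (simp add: E_def tenv_def nth_append)
    next
      case 2 then show ?thesis using lb by (simp add: E_def tenv_def nth_append)
    qed
  qed
  have 2: "sat M UNIV (E z w) (rn (sw 0 (Suc n)) \<delta>) = sat M UNIV (tenv [w]) \<delta>" for z w
  proof -
    have "sat M UNIV (E z w) (rn (sw 0 (Suc n)) \<delta>) = sat M UNIV (E z w \<circ> sw 0 (Suc n)) \<delta>"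
      by (simp add: sat_rn)
    also have "\<dots> = sat M UNIV (tenv [w]) \<delta>"
      by (rule fv_tenv1[OF fvd]) (simp add: E_def sw_def)
    finally show ?thesis .
  qed
  have 3: "E z w n = z" "E z w (Suc n) = w" for z w by (simp_all add: E_def)
  show ?thesis unfolding 0 1 2 3 ..
qed

theorem lemma4p3:
  fixes M :: "'a pres_struct" and M0 :: "'a set" and n :: nat
    and p :: "'a fm set" and \<alpha> :: "'a list \<Rightarrow> 'a" and a :: "'a list"
  assumes "presburger_model M"
    and "saturated M"
    and "elem_sub M M0"
    and "small M0"
    and "complete_type M M0 n p"
    and "type_has_dim M M0 n p n"
    and "rel_definable M M0 n (realizations M n p) \<alpha>"
    and "a \<in> realizations M n p"
    and "non_algebraic M 1 (tp M M0 [\<alpha> a])"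
  shows "\<exists>a1\<in>realizations M n p. \<exists>a2\<in>realizations M n p.
           \<forall>y\<in>dcl M (set a \<union> M0) \<inter> {y. same_cut M M0 y (\<alpha> a)}.
             less M (\<alpha> a1) y \<and> less M y (\<alpha> a2)"
proof -
  note pm = assms(1) and satd = assms(2) and es = assms(3) and sm = assms(4) and ct = assms(5)
    and rd = assms(7) and aP = assms(8) and na = assms(9)
  obtain \<phi>a where pa: "\<phi>a \<in> fmls M0 (Suc n)"
    and uq: "\<And>b. length b = n \<Longrightarrow> \<exists>!y. sat M UNIV (tenv (b @ [y])) \<phi>a"
    and gr: "\<And>b. b \<in> realizations M n p \<Longrightarrow> sat M UNIV (tenv (b @ [\<alpha> b])) \<phi>a"
    using rd unfolding rel_definable_def by blast
  have fva: "fv \<phi>a \<subseteq> {..<Suc n}" and para: "set_fm \<phi>a \<subseteq> M0" using pa by (auto simp: fmls_def)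
  define t where "t = \<alpha> a"
  have la: "length a = n" and ap: "\<forall>\<phi>\<in>p. sat M UNIV (tenv a) \<phi>" using aP by (auto simp: realizations_def)
  have pf: "p \<subseteq> fmls M0 n" using ct by (simp add: complete_type_def)
  have na': "\<And>\<phi>. \<phi> \<in> tp M M0 [t] \<Longrightarrow> infinite {b. length b = 1 \<and> sat M UNIV (tenv b) \<phi>}"
    using na unfolding non_algebraic_def t_def by blast
  have inf: "\<not> finite (UNIV::'a set)"
  proof
    assume fU: "finite (UNIV::'a set)"
    have "Eq (Var 0) (Var 0) \<in> tp M M0 [t]" by (auto simp: tp_def fmls_def)
    then have "infinite {b. length b = 1 \<and> sat M UNIV (tenv b) (Eq (Var 0) (Var 0))}"
      by (rule na')
    moreover have "{b. length b = 1 \<and> sat M UNIV (tenv b) (Eq (Var 0) (Var 0))} \<subseteq> {xs. set xs \<subseteq> UNIV \<and> length xs = 1}"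
      by auto
    moreover have "finite {xs::'a list. set xs \<subseteq> UNIV \<and> length xs = 1}"
      using fU by (rule finite_lists_length_eq)
    ultimately show False using finite_subset by blast
  qed
  have tM0: "t \<notin> M0"
  proof
    assume "t \<in> M0"
    then have "Eq (Var 0) (Par t) \<in> tp M M0 [t]" by (auto simp: tp_def fmls_def tenv_def)
    then have "infinite {b. length b = 1 \<and> sat M UNIV (tenv b) (Eq (Var 0) (Par t))}"
      by (rule na')
    moreover have "{b. length b = 1 \<and> sat M UNIV (tenv b) (Eq (Var 0) (Par t))} \<subseteq> {[t]}"
    proof
      fix b :: "'a list" assume "b \<in> {b. length b = 1 \<and> sat M UNIV (tenv b) (Eq (Var 0) (Par t))}"
      then have "length b = 1" "b ! 0 = t" by (auto simp: tenv_def)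
      then show "b \<in> {[t]}" by (cases b) auto
    qed
    ultimately show False using finite_subset by blast
  qed
  have smA: "small (M0 \<union> set a)" using small_Un[OF sm _ inf] by simp
  define Y where "Y = dcl M (set a \<union> M0) \<inter> {y. same_cut M M0 y t}"
  have main: "\<exists>a1\<in>realizations M n p. \<forall>y\<in>Y. lessd M d (\<alpha> a1) y" for d
  proof -
    define \<delta> where "\<delta> y = (SOME \<phi>. \<phi> \<in> fmls (set a \<union> M0) 1 \<and> {x. sat M UNIV (tenv [x]) \<phi>} = {y})" for y
    have \<delta>: "\<delta> y \<in> fmls (set a \<union> M0) 1 \<and> {x. sat M UNIV (tenv [x]) (\<delta> y)} = {y}" if "y \<in> Y" for y
    proof -
      have "\<exists>\<phi>. \<phi> \<in> fmls (set a \<union> M0) 1 \<and> {x. sat M UNIV (tenv [x]) \<phi>} = {y}"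
        using that by (auto simp: Y_def dcl_def)
      then show ?thesis unfolding \<delta>_def by (rule someI_ex)
    qed
    have fvd: "fv (\<delta> y) \<subseteq> {0}" and pard: "set_fm (\<delta> y) \<subseteq> set a \<union> M0" if "y \<in> Y" for y
      using \<delta>[OF that] by (auto simp: fmls_def)
    have dy: "sat M UNIV (tenv [w]) (\<delta> y) = (w = y)" if "y \<in> Y" for y w
      using \<delta>[OF that] by blast
    define \<theta> where "\<theta> y = Ex n (Ex (Suc n) (Conj \<phi>a (Conj (rn (sw 0 (Suc n)) (\<delta> y)) (Lt d (Var n) (Var (Suc n))))))" for y
    have ths: "sat M UNIV (tenv b) (\<theta> y) = (\<exists>z. sat M UNIV (tenv (b @ [z])) \<phi>a \<and> lessd M d z y)"
      if "y \<in> Y" "length b = n" for y b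
    proof -
      have "sat M UNIV (tenv b) (\<theta> y) = (\<exists>z w. sat M UNIV (tenv (b @ [z])) \<phi>a \<and> sat M UNIV (tenv [w]) (\<delta> y) \<and> lessd M d z w)"
        unfolding \<theta>_def by (rule theta_sem[OF fva fvd[OF that(1)] that(2)])
      also have "\<dots> = (\<exists>z. sat M UNIV (tenv (b @ [z])) \<phi>a \<and> lessd M d z y)"
        using dy[OF that(1)] by simp
      finally show ?thesis .
    qed
    define \<Gamma> where "\<Gamma> = p \<union> \<theta> ` Y"
    have GF: "\<Gamma> \<subseteq> fmls (M0 \<union> set a) n"
    proof
      fix f assume "f \<in> \<Gamma>"
      then consider "f \<in> p" | y where "y \<in> Y" "f = \<theta> y" by (auto simp: \<Gamma>_def)
      then show "f \<in> fmls (M0 \<union> set a) n"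
      proof cases
        case 1 then show ?thesis using pf by (auto simp: fmls_def)
      next
        case 2
        have "set_fm f \<subseteq> M0 \<union> set a" using 2 para pard[OF 2(1)] by (auto simp: \<theta>_def)
        moreover have "fv f \<subseteq> {..<n}"
        proof -
          have "fv (rn (sw 0 (Suc n)) (\<delta> y)) \<subseteq> {Suc n}"
            using fvd[OF 2(1)] by (auto simp: fv_rn sw_def)
          then show ?thesis using fva 2(2) by (auto simp: \<theta>_def)
        qed
        ultimately show ?thesis by (auto simp: fmls_def)
      qed
    qed
    have fsat: "\<forall>F. F \<subseteq> \<Gamma> \<longrightarrow> finite F \<longrightarrow> (\<exists>b. length b = n \<and> (\<forall>\<phi>\<in>F. sat M UNIV (tenv b) \<phi>))"
    proof (intro allI impI)
      fix F assume FG: "F \<subseteq> \<Gamma>" and fF: "finite F"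
      have "F - p \<subseteq> \<theta> ` Y" using FG by (auto simp: \<Gamma>_def)
      moreover have "finite (F - p)" using fF by simp
      ultimately obtain Y' where Y': "Y' \<subseteq> Y" "finite Y'" "F - p = \<theta> ` Y'"
        using finite_subset_image by metis
      obtain Lp where Lp: "set Lp = F \<inter> p" using fF finite_list by (metis finite_Int)
      define g where "g = Conj (conjL Lp) \<phi>a"
      have fvLp: "\<forall>f\<in>set Lp. fv f \<subseteq> {..<n}" using Lp pf by (auto simp: fmls_def)
      have "fv (conjL Lp) \<subseteq> {..<n}" using fvLp by (simp only: fv_conjL) blast
      then have fvg: "fv g \<subseteq> {..<Suc n}" using fva by (auto simp: g_def)
      define \<psi> where "\<psi> = rn (sw 0 n) (exs [0..<0+n] g)"
      have psem: "sat M UNIV (tenv [x]) \<psi> = (\<exists>b. length b = n \<and> sat M UNIV (tenv (b @ [x])) g)" for x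
        unfolding \<psi>_def by (rule psi_sem[OF fvg])
      have gsem: "sat M UNIV (tenv (b @ [x])) g = ((\<forall>f\<in>set Lp. sat M UNIV (tenv b) f) \<and> sat M UNIV (tenv (b @ [x])) \<phi>a)"
        if "length b = n" for b x
      proof -
        have "\<forall>f\<in>set Lp. sat M UNIV (tenv (b @ [x])) f = sat M UNIV (tenv b) f"
        proof
          fix f assume "f \<in> set Lp"
          then have "fv f \<subseteq> {..<n}" using fvLp by blast
          then show "sat M UNIV (tenv (b @ [x])) f = sat M UNIV (tenv b) f"
            by (intro sat_fv) (auto simp: tenv_def nth_append that)
        qed
        then show ?thesis by (simp add: g_def)
      qed
      have psiF: "\<psi> \<in> fmls M0 1"
      proof -
        have "set_fm \<psi> \<subseteq> M0" using Lp pf para by (auto simp: \<psi>_def g_def fmls_def)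
        moreover have "fv \<psi> \<subseteq> {0}"
        proof -
          have "fv (exs [0..<0+n] g) \<subseteq> {n}" using fvg by auto
          then show ?thesis unfolding \<psi>_def fv_rn[OF inj_sw] by (auto simp: sw_def)
        qed
        ultimately show ?thesis by (auto simp: fmls_def)
      qed
      have pt: "sat M UNIV (tenv [t]) \<psi>"
      proof -
        have "\<forall>f\<in>set Lp. sat M UNIV (tenv a) f" using Lp ap by blast
        moreover have "sat M UNIV (tenv (a @ [t])) \<phi>a" using gr[OF aP] by (simp add: t_def)
        ultimately show ?thesis using psem gsem la by blast
      qed
      have cutY: "\<forall>y\<in>Y'. same_cut M M0 y t" using Y'(1) by (auto simp: Y_def)
      obtain x where x: "sat M UNIV (tenv [x]) \<psi>" "\<forall>y\<in>Y'. lessd M d x y"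
        using coinit[OF pm es psiF pt tM0 Y'(2) cutY] by blast
      obtain b where b: "length b = n" "sat M UNIV (tenv (b @ [x])) g" using x(1) psem by blast
      have bL: "\<forall>f\<in>set Lp. sat M UNIV (tenv b) f" and bA: "sat M UNIV (tenv (b @ [x])) \<phi>a"
        using gsem[OF b(1)] b(2) by blast+
      have "\<forall>\<phi>\<in>F. sat M UNIV (tenv b) \<phi>"
      proof
        fix \<phi> assume "\<phi> \<in> F"
        show "sat M UNIV (tenv b) \<phi>"
        proof (cases "\<phi> \<in> p")
          case True then show ?thesis using bL Lp \<open>\<phi> \<in> F\<close> by blast
        next
          case False
          then obtain y where y: "y \<in> Y'" "\<phi> = \<theta> y" using Y'(3) \<open>\<phi> \<in> F\<close> by blast
          then have "y \<in> Y" using Y'(1) by blast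
          then show ?thesis using ths[OF _ b(1)] y bA x(2) by blast
        qed
      qed
      then show "\<exists>b. length b = n \<and> (\<forall>\<phi>\<in>F. sat M UNIV (tenv b) \<phi>)" using b(1) by blast
    qed
    obtain a1 where a1: "length a1 = n" "\<forall>\<phi>\<in>\<Gamma>. sat M UNIV (tenv a1) \<phi>"
      using nsat[OF satd smA inf GF fsat] by blast
    have a1P: "a1 \<in> realizations M n p" using a1 by (auto simp: realizations_def \<Gamma>_def)
    have "\<forall>y\<in>Y. lessd M d (\<alpha> a1) y"
    proof
      fix y assume yY: "y \<in> Y"
      then have "sat M UNIV (tenv a1) (\<theta> y)" using a1(2) by (auto simp: \<Gamma>_def)
      then obtain z where z: "sat M UNIV (tenv (a1 @ [z])) \<phi>a" "lessd M d z y"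
        using ths[OF yY a1(1)] by blast
      have "z = \<alpha> a1" using uq[OF a1(1)] z(1) gr[OF a1P] by blast
      then show "lessd M d (\<alpha> a1) y" using z(2) by simp
    qed
    then show ?thesis using a1P by blast
  qed
  obtain a1 where a1: "a1 \<in> realizations M n p" "\<forall>y\<in>Y. lessd M True (\<alpha> a1) y" using main by blast
  obtain a2 where a2: "a2 \<in> realizations M n p" "\<forall>y\<in>Y. lessd M False (\<alpha> a2) y" using main by blast
  have "\<forall>y\<in>dcl M (set a \<union> M0) \<inter> {y. same_cut M M0 y (\<alpha> a)}. less M (\<alpha> a1) y \<and> less M y (\<alpha> a2)"
    using a1(2) a2(2) by (simp add: Y_def t_def lessd_def)
  then show ?thesis using a1(1) a2(1) by blast
qed

end
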